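(* For every integer $d\ge6$, the polynomial $x^d-x^{d-1}-1$ has at least two roots strictly outside the closed unit disk. Moreover, as $d\to\infty$, approximately $\frac d3$ of its roots lie outside the unit disk (the number of such roots is $(\tfrac13+o(1))d$). *)

theory Defs
  imports "HOL-Analysis.Analysis" "HOL-Computational_Algebra.Polynomial"
begin

definition trinom :: "nat \<Rightarrow> complex poly" where
  "trinom d = monom 1 d - monom 1 (d - 1) - 1"

definition outer_roots :: "nat \<Rightarrow> nat" where
  "outer_roots d = card {z::complex. poly (trinom d) z = 0 \<and> 1 < norm z}"

end

theory Submission
  imports Defs "HOL-Complex_Analysis.Weierstrass_Factorization"
begin

definition TT :: "nat \<Rightarrow> nat \<Rightarrow> complex \<Rightarrow> complex" where
  "TT d k w = exp (complex_of_real (2*pi*real k/real d) * \<i> + Ln (1 - w) / of_nat d)"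

lemma TT_root:
  assumes "d > 0" "1 - w \<noteq> 0" "TT d k w = w"
  shows "w ^ d = 1 - w"
proof -
  have "w ^ d = exp (of_nat d * (complex_of_real (2*pi*real k/real d) * \<i> + Ln (1 - w) / of_nat d))"
    using assms(3) by (metis TT_def exp_of_nat_mult)
  also have "of_nat d * (complex_of_real (2*pi*real k/real d) * \<i> + Ln (1 - w) / of_nat d)
     = complex_of_real (2*pi*real k) * \<i> + Ln (1 - w)"
    using assms(1) by (simp add: field_simps)
  also have "exp \<dots> = exp (complex_of_real (2*pi*real k) * \<i>) * (1 - w)"
    using assms(2) by (simp add: exp_add)
  also have "exp (complex_of_real (2*pi*real k) * \<i>) = 1"
    by (subst exp_eq_1) (auto intro: exI[of _ "int k"])
  finally show ?thesis by simp
qed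

lemma TT_inj:
  assumes "d > 0" "k < d" "j < d" "TT d k w = w" "TT d j w = w"
  shows "k = j"
proof -
  from assms have "exp (complex_of_real (2*pi*real k/real d) * \<i> + Ln (1 - w) / of_nat d)
     = exp (complex_of_real (2*pi*real j/real d) * \<i> + Ln (1 - w) / of_nat d)"
    unfolding TT_def by simp
  then obtain n :: int where n: "complex_of_real (2*pi*real k/real d) * \<i> + Ln (1 - w) / of_nat d
     = complex_of_real (2*pi*real j/real d) * \<i> + Ln (1 - w) / of_nat d + (of_int (2 * n) * pi) * \<i>"
    unfolding exp_eq by blast
  then have "Im (complex_of_real (2*pi*real k/real d) * \<i>) = Im (complex_of_real (2*pi*real j/real d) * \<i> + (of_int (2 * n) * pi) * \<i>)"
    by (metis add.commute add_left_cancel add.assoc)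
  then have "2*pi*real k/real d = 2*pi*real j/real d + 2 * n * pi" by simp
  then have "2*pi*real k = 2*pi*(real j + n * real d)" using assms(1) by (simp add: field_simps)
  then have "real k = real j + n * real d" by simp
  then have "real_of_int (int k) = real_of_int (int j + n * int d)" by simp
  then have "int k = int j + n * int d" by (simp only: of_int_eq_iff)
  moreover have "n = 0"
  proof (rule ccontr)
    assume "n \<noteq> 0"
    then have "n \<ge> 1 \<or> n \<le> -1" by linarith
    moreover have "n \<ge> 1 \<Longrightarrow> n * int d \<ge> 1 * int d" by (rule mult_right_mono) auto
    moreover have "n \<le> -1 \<Longrightarrow> n * int d \<le> (-1) * int d" by (rule mult_right_mono) auto
    ultimately have "n * int d \<ge> int d \<or> n * int d \<le> - int d" by auto
    with \<open>int k = int j + n * int d\<close> assms(2,3) show False by linarith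
  qed
  ultimately show "k = j" by simp
qed

lemma TT_parts:
  fixes d k w
  defines "x \<equiv> Re (Ln (1 - w)) / real d"
    and "y \<equiv> 2*pi*real k/real d + Im (Ln (1 - w)) / real d"
  shows "Re (TT d k w) = exp x * cos y" "Im (TT d k w) = exp x * sin y" "norm (TT d k w) = exp x"
  by (simp_all add: TT_def Re_exp Im_exp norm_exp_eq_Re x_def y_def Re_divide_of_nat Im_divide_of_nat)

lemma norm_one_minus_sq:
  fixes z :: complex
  shows "(norm (1 - z))^2 = 1 - 2 * Re z + (norm z)^2"
  by (simp only: cmod_power2) (simp add: power2_eq_square algebra_simps)

lemma outer_fix:
  assumes d: "6 \<le> d" and k: "1 \<le> k" "6*k \<le> d"
  obtains w where "TT d k w = w" "norm w < 1" "Im w > 0" "w^d = 1 - w"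
proof -
  have dr: "real d \<ge> 6" using d by simp
  have kr: "real k \<ge> 1" "6 * real k \<le> real d" using k by simp_all
  define c where "c = cos (3*pi/(2*real d))"
  define K where "K = cball (0::complex) 1 \<inter> cball 1 1 \<inter> {w. 0 \<le> Im w} \<inter> {w. Re w \<le> c}"
  have a1: "3*pi/(2*real d) \<le> pi/3" using dr by (simp add: field_simps)
  have a0: "0 < 3*pi/(2*real d)" using dr by simp
  have c1: "c < 1" unfolding c_def using cos_monotone_0_pi[of 0 "3*pi/(2*real d)"] a0 a1 by simp
  have chalf: "1/2 \<le> c" unfolding c_def using cos_monotone_0_pi_le[of "3*pi/(2*real d)" "pi/3"] a0 a1 cos_60 by simp
  have kpi: "2*pi*real k/real d \<le> pi/3"
  proof -
    have "2*pi*real k/real d = (pi/3) * (6 * real k / real d)" by (simp add: field_simps)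
    also have "\<dots> \<le> (pi/3) * 1" using kr dr by (intro mult_left_mono) (auto simp: field_simps)
    finally show ?thesis by simp
  qed
  have kpi2: "2*pi/real d \<le> 2*pi*real k/real d" using kr dr by (simp add: field_simps)
  have inK: "norm w \<le> 1 \<and> norm (1 - w) \<le> 1 \<and> 0 \<le> Im w \<and> Re w \<le> c" if "w \<in> K" for w
    using that by (auto simp: K_def dist_norm norm_minus_commute)
  have props: "0 < Re (1 - w) \<and> 1 - w \<noteq> 0 \<and>
       Re (Ln (1 - w)) / real d \<le> 0 \<and>
       3*pi/(2*real d) \<le> 2*pi*real k/real d + Im (Ln (1 - w)) / real d \<and>
       2*pi*real k/real d + Im (Ln (1 - w)) / real d \<le> pi/3 \<and>
       (0 < Im w \<longrightarrow> 2*pi*real k/real d + Im (Ln (1 - w)) / real d < pi/3)"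
    if "w \<in> K" for w
  proof -
    note w = inK[OF that]
    have re: "0 < Re (1 - w)" using w c1 by simp
    then have nz: "1 - w \<noteq> 0" by auto
    have "Re (Ln (1 - w)) \<le> 0" using nz w by simp
    then have x: "Re (Ln (1 - w)) / real d \<le> 0" using dr by (simp add: divide_nonpos_pos)
    have abs: "\<bar>Im (Ln (1 - w))\<bar> \<le> pi/2" using Re_Ln_pos_le[OF nz] re by simp
    have le0: "Im (Ln (1 - w)) \<le> 0"
    proof (rule ccontr)
      assume "\<not> ?thesis"
      then have "0 < Im (Ln (1 - w)) \<and> Im (Ln (1 - w)) < pi" using abs pi_gt_zero by linarith
      then have "0 < Im (1 - w)" using Im_Ln_pos_lt[OF nz] by blast
      then show False using w by simp
    qed
    have lt0: "Im (Ln (1 - w)) < 0" if "0 < Im w"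
    proof (rule ccontr)
      assume "\<not> ?thesis"
      then have "0 \<le> Im (Ln (1 - w)) \<and> Im (Ln (1 - w)) \<le> pi" using abs pi_gt_zero by linarith
      then have "0 \<le> Im (1 - w)" using Im_Ln_pos_le[OF nz] by blast
      then show False using \<open>0 < Im w\<close> by simp
    qed
    have "Im (Ln (1 - w)) / real d \<ge> - (pi/2) / real d" using abs dr by (intro divide_right_mono) auto
    moreover have "- (pi/2) / real d + 2*pi/real d = 3*pi/(2*real d)" using dr by (simp add: field_simps)
    ultimately have y1: "3*pi/(2*real d) \<le> 2*pi*real k/real d + Im (Ln (1 - w)) / real d"
      using kpi2 by linarith
    have "Im (Ln (1 - w)) / real d \<le> 0" using le0 dr by (simp add: divide_nonpos_pos)
    then have y2: "2*pi*real k/real d + Im (Ln (1 - w)) / real d \<le> pi/3" using kpi by linarith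
    have y3: "2*pi*real k/real d + Im (Ln (1 - w)) / real d < pi/3" if "0 < Im w"
    proof -
      have "Im (Ln (1 - w)) / real d < 0" using lt0[OF that] dr by (simp add: divide_neg_pos)
      then show ?thesis using kpi by linarith
    qed
    show ?thesis using re nz x y1 y2 y3 by blast
  qed
  have TK: "TT d k w \<in> K" if "w \<in> K" for w
  proof -
    define x where "x = Re (Ln (1 - w)) / real d"
    define y where "y = 2*pi*real k/real d + Im (Ln (1 - w)) / real d"
    note p = props[OF that, folded x_def y_def]
    note tp = TT_parts[of d k w, folded x_def y_def]
    have y0: "0 \<le> y" "y \<le> pi/3" using p a0 by linarith+
    have ex: "exp x \<le> 1" "0 < exp x" using p by auto
    have cy: "1/2 \<le> cos y" using cos_monotone_0_pi_le[of y "pi/3"] y0 cos_60 by simp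
    have cy2: "cos y \<le> c" unfolding c_def using cos_monotone_0_pi_le[of "3*pi/(2*real d)" y] y0 p a0 by simp
    have n1: "norm (TT d k w) \<le> 1" using tp ex by simp
    have "(norm (1 - TT d k w))^2 = 1 - 2 * (exp x * cos y) + (exp x)^2"
      using norm_one_minus_sq[of "TT d k w"] tp by simp
    also have "\<dots> \<le> 1"
    proof -
      have "(exp x)^2 \<le> exp x" using ex by (simp add: power2_eq_square mult_left_le_one_le less_imp_le)
      also have "exp x \<le> 2 * (exp x * cos y)" using ex cy by (simp add: mult_left_mono)
      finally show ?thesis by simp
    qed
    finally have n2: "norm (1 - TT d k w) \<le> 1" by (simp add: power2_le_imp_le)
    have i: "0 \<le> Im (TT d k w)" using tp ex y0 sin_ge_zero[of y] by simp
    have r: "Re (TT d k w) \<le> c"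
    proof -
      have "exp x * cos y \<le> cos y" using ex cy by (simp add: mult_left_le_one_le)
      then show ?thesis using tp cy2 by simp
    qed
    show ?thesis using n1 n2 i r by (simp add: K_def dist_norm norm_minus_commute)
  qed
  have cK: "compact K" unfolding K_def
    by (intro compact_Int_closed compact_Int compact_cball closed_halfspace_Im_ge closed_halfspace_Re_le)
  have vK: "convex K" unfolding K_def
    by (intro convex_Int convex_cball convex_halfspace_Im_ge convex_halfspace_Re_le)
  have neK: "K \<noteq> {}"
  proof -
    have "(1/2::complex) \<in> K" using chalf by (simp add: K_def dist_norm)
    then show ?thesis by blast
  qed
  have ctK: "continuous_on K (TT d k)"
  proof -
    have "1 - w \<notin> \<real>\<^sub>\<le>\<^sub>0" if "w \<in> K" for w using props[OF that] by (auto simp: complex_nonpos_Reals_iff)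
    then show ?thesis unfolding TT_def using d by (intro continuous_intros) auto
  qed
  obtain w where wK: "w \<in> K" and fw: "TT d k w = w"
    using brouwer[OF cK vK neK ctK] TK by blast
  define x where "x = Re (Ln (1 - w)) / real d"
  define y where "y = 2*pi*real k/real d + Im (Ln (1 - w)) / real d"
  note p = props[OF wK, folded x_def y_def]
  note tp = TT_parts[of d k w, folded x_def y_def, unfolded fw]
  have y0: "0 < y" "y \<le> pi/3" using p a0 by linarith+
  have imw: "0 < Im w" using tp y0 sin_gt_zero[of y] pi_gt_zero by simp
  have y1: "y < pi/3" using p imw by blast
  have cy: "1/2 < cos y" using cos_monotone_0_pi[of y "pi/3"] y0 y1 cos_60 by simp
  have root: "w ^ d = 1 - w" using TT_root[of d w k] d p fw by simp
  have nw: "norm w < 1"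
  proof (rule ccontr)
    assume "\<not> ?thesis"
    then have n1: "norm w = 1" using inK[OF wK] by simp
    then have "exp x = 1" using tp by simp
    then have "Re w > 1/2" using tp cy by simp
    moreover have "norm (1 - w) = 1" using root n1 by (metis norm_power power_one)
    ultimately show False using norm_one_minus_sq[of w] n1 by simp
  qed
  show ?thesis using that fw nw imw root by blast
qed

lemma inner_fix:
  assumes d: "24 \<le> d" and ck: "cos (2*pi*real k/real d) \<le> 1/2 - 12/real d"
  obtains w where "TT d k w = w" "1 \<le> norm w" "w^d = 1 - w"
proof -
  have dr: "real d \<ge> 24" using d by simp
  define \<rho> where "\<rho> = 6 / real d"
  have \<rho>: "0 < \<rho>" "\<rho> \<le> 1/4" using dr by (auto simp: \<rho>_def field_simps)
  define \<omega> where "\<omega> = exp (complex_of_real (2*pi*real k/real d) * \<i>)"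
  have n\<omega>: "norm \<omega> = 1" by (simp add: \<omega>_def norm_exp_eq_Re)
  have re\<omega>: "Re \<omega> = cos (2*pi*real k/real d)" by (simp add: \<omega>_def Re_exp)
  define B where "B = cball \<omega> \<rho>"
  have d1: "norm (1 - \<omega>) \<ge> 1 + \<rho>"
  proof -
    have "(1 + \<rho>)^2 \<le> 1 + 4 * \<rho>" using \<rho> by (simp add: power2_eq_square algebra_simps)
    also have "1 + 4 * \<rho> \<le> 2 - 2 * Re \<omega>" using ck re\<omega> by (simp add: \<rho>_def)
    also have "2 - 2 * Re \<omega> = (norm (1 - \<omega>))^2" using norm_one_minus_sq[of \<omega>] n\<omega> by simp
    finally show ?thesis by (rule power2_le_imp_le) simp
  qed
  have props: "0 < Re (1 - w) \<and> 1 \<le> norm (1 - w) \<and> norm (1 - w) \<le> 3" if "w \<in> B" for w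
  proof -
    have dw: "norm (w - \<omega>) \<le> \<rho>" using that by (simp add: B_def dist_norm norm_minus_commute)
    have "Re w - Re \<omega> \<le> \<rho>" using abs_Re_le_cmod[of "w - \<omega>"] dw by simp
    moreover have "12 / real d = 2 * \<rho>" by (simp add: \<rho>_def)
    ultimately have "Re w < 1" using ck re\<omega> \<rho> by linarith
    moreover have "norm (1 - \<omega>) \<le> norm (1 - w) + norm (w - \<omega>)"
      using norm_triangle_ineq[of "1 - w" "w - \<omega>"] by simp
    moreover have "norm (1 - w) \<le> 1 + norm w" using norm_triangle_ineq4[of 1 w] by simp
    moreover have "norm w \<le> norm \<omega> + norm (w - \<omega>)" using norm_triangle_ineq[of \<omega> "w - \<omega>"] by simp
    ultimately show ?thesis using d1 dw n\<omega> \<rho> by simp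
  qed
  have TB: "TT d k w \<in> B" if "w \<in> B" for w
  proof -
    note p = props[OF that]
    have nz: "1 - w \<noteq> 0" using p by auto
    define L where "L = Ln (1 - w)"
    have reL: "0 \<le> Re L" "Re L \<le> 2"
      using p nz ln_le_minus_one[of "norm (1 - w)"] by (auto simp: L_def)
    have imL: "\<bar>Im L\<bar> \<le> pi/2" using Re_Ln_pos_le[OF nz] p by (simp add: L_def)
    have "norm L \<le> 4" using cmod_le[of L] reL imL pi_less_4 by linarith
    then have na: "norm (L / of_nat d) \<le> 4 / real d" using dr by (simp add: norm_divide divide_right_mono)
    also have "4 / real d \<le> 1/2" using dr by (simp add: field_simps)
    finally have "norm (exp (L / of_nat d) - 1) \<le> 3/2 * norm (L / of_nat d)" by (rule norm_exp_bounds(2))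
    also have "\<dots> \<le> 3/2 * (4 / real d)" using na by simp
    also have "\<dots> = \<rho>" by (simp add: \<rho>_def)
    finally have e: "norm (exp (L / of_nat d) - 1) \<le> \<rho>" .
    have "TT d k w = \<omega> * exp (L / of_nat d)" by (simp add: TT_def \<omega>_def L_def exp_add)
    then have "dist \<omega> (TT d k w) = norm \<omega> * norm (exp (L / of_nat d) - 1)"
      by (simp add: dist_norm norm_mult[symmetric] algebra_simps norm_minus_commute)
    then show ?thesis using e n\<omega> by (simp add: B_def)
  qed
  have ctB: "continuous_on B (TT d k)"
  proof -
    have "1 - w \<notin> \<real>\<^sub>\<le>\<^sub>0" if "w \<in> B" for w using props[OF that] by (auto simp: complex_nonpos_Reals_iff)
    then show ?thesis unfolding TT_def using d by (intro continuous_intros) auto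
  qed
  have neB: "B \<noteq> {}" using \<rho> by (auto simp: B_def intro!: exI[of _ \<omega>])
  obtain w where wB: "w \<in> B" and fw: "TT d k w = w"
    using brouwer[OF compact_cball[of \<omega> \<rho>] convex_cball[of \<omega> \<rho>], folded B_def, OF neB ctB] TB by blast
  note p = props[OF wB]
  have nz1: "1 - w \<noteq> 0" using p by auto
  have dpos: "0 < d" using d by simp
  have root: "w ^ d = 1 - w" using TT_root[OF dpos nz1 fw] .
  have "1 \<le> norm w"
  proof (rule ccontr)
    assume "\<not> ?thesis"
    then have "norm w ^ d < 1" using d by (simp add: power_less_one_iff)
    moreover have "norm w ^ d = norm (1 - w)" using root by (metis norm_power)
    ultimately show False using p by linarith
  qed
  then show ?thesis using that fw root by blast
qed

lemma sin_lower: fixes x :: real assumes "0 \<le> x" "x \<le> 1" shows "5 * x / 6 \<le> sin x"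
proof -
  have s: "(\<Sum>m<3. sin_coeff m * x ^ m) = x"
    by (simp add: sin_coeff_def numeral_3_eq_3 lessThan_Suc)
  have "\<bar>sin x - x\<bar> \<le> inverse (fact 3) * \<bar>x\<bar> ^ 3"
    using Maclaurin_sin_bound[of x 3] s by simp
  then have "\<bar>sin x - x\<bar> \<le> 1/6 * \<bar>x\<bar> ^ 3" by (simp add: fact_numeral)
  moreover have "\<bar>x\<bar> ^ 3 \<le> x"
  proof -
    have "x*x \<le> 1" using assms by (simp add: mult_le_one)
    then have "x*x*x \<le> 1*x" using assms by (intro mult_right_mono) auto
    then show ?thesis using assms by (simp add: power3_eq_cube)
  qed
  ultimately show ?thesis by linarith
qed

lemma cos_bound:
  assumes d: "24 \<le> d" and k1: "real d/6 + 3 \<le> real k" and k2: "real k \<le> 5*real d/6 - 3"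
  shows "cos (2*pi*real k/real d) \<le> 1/2 - 12/real d"
proof -
  have dr: "real d \<ge> 24" using d by simp
  define \<theta> where "\<theta> = 2*pi*real k/real d"
  define \<eta> where "\<eta> = 6*pi/real d"
  have t1: "pi/3 + \<eta> \<le> \<theta>"
  proof -
    have "\<theta> - (pi/3 + \<eta>) = (2*pi/real d) * (real k - real d/6 - 3)"
      using dr by (simp add: \<theta>_def \<eta>_def field_simps)
    moreover have "0 \<le> (2*pi/real d) * (real k - real d/6 - 3)" using k1 by simp
    ultimately show ?thesis by linarith
  qed
  have t2: "\<theta> \<le> 5*pi/3 - \<eta>"
  proof -
    have "(5*pi/3 - \<eta>) - \<theta> = (2*pi/real d) * (5*real d/6 - 3 - real k)"
      using dr by (simp add: \<theta>_def \<eta>_def field_simps)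
    moreover have "0 \<le> (2*pi/real d) * (5*real d/6 - 3 - real k)" using k2 by simp
    ultimately show ?thesis by linarith
  qed
  have e0: "0 < \<eta>" using dr by (simp add: \<eta>_def)
  have e1: "\<eta> \<le> 1"
  proof -
    have "6*pi \<le> real d" using pi_less_4 dr by linarith
    then show ?thesis using dr by (simp add: \<eta>_def field_simps)
  qed
  have e18: "18 / real d \<le> \<eta>"
  proof -
    have "18 \<le> 6*pi" using pi_gt3 by linarith
    then show ?thesis using dr by (simp add: \<eta>_def divide_right_mono)
  qed
  have c1: "cos \<theta> \<le> cos (pi/3 + \<eta>)"
  proof (cases "\<theta> \<le> pi")
    case True
    then show ?thesis using cos_monotone_0_pi_le[of "pi/3 + \<eta>" \<theta>] t1 e0 by simp
  next
    case False
    have "cos \<theta> = cos (2*pi - \<theta>)" by (simp add: cos_diff)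
    also have "\<dots> \<le> cos (pi/3 + \<eta>)" using cos_monotone_0_pi_le[of "pi/3 + \<eta>" "2*pi - \<theta>"] t2 e0 False by simp
    finally show ?thesis .
  qed
  have "cos (pi/3 + \<eta>) = cos \<eta> / 2 - sqrt 3 / 2 * sin \<eta>"
    by (simp add: cos_add cos_60 sin_60)
  also have "\<dots> \<le> 1/2 - sqrt 3 / 2 * sin \<eta>" by simp
  also have "\<dots> \<le> 1/2 - 12 / real d"
  proof -
    have sq: "1.7 \<le> sqrt 3" by (rule real_le_rsqrt) (simp add: power2_eq_square)
    have "15 / real d \<le> 5 * \<eta> / 6" using e18 by (simp add: field_simps)
    also have "\<dots> \<le> sin \<eta>" using sin_lower e0 e1 by simp
    finally have s: "15 / real d \<le> sin \<eta>" .
    have "0.85 * (15 / real d) \<le> sqrt 3 / 2 * sin \<eta>"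
      using sq s dr by (intro mult_mono) auto
    moreover have "0.85 * (15 / real d) \<ge> 12 / real d" using dr by (simp add: field_simps)
    ultimately show ?thesis by linarith
  qed
  finally show ?thesis using c1 by (simp add: \<theta>_def)
qed

lemma poly_trinom: "1 \<le> d \<Longrightarrow> poly (trinom d) z = z^d - z^(d-1) - 1"
  by (simp add: trinom_def poly_monom)

lemma trinom_nz: "2 \<le> d \<Longrightarrow> trinom d \<noteq> 0"
proof
  assume "2 \<le> d" "trinom d = 0"
  then have "poly (trinom d) 0 = 0" by simp
  moreover have "poly (trinom d) 0 = -1" using \<open>2 \<le> d\<close> by (simp add: poly_trinom power_0_left)
  ultimately show False by simp
qed

lemma trinom_deg: "degree (trinom d) \<le> d"
  unfolding trinom_def
  by (intro degree_diff_le) (auto intro: order.trans[OF degree_monom_le])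

lemma roots_finite_card:
  assumes "2 \<le> d"
  shows "finite {z. poly (trinom d) z = 0}" "card {z. poly (trinom d) z = 0} \<le> d"
  using poly_roots_finite[OF trinom_nz[OF assms]] card_poly_roots_bound[OF trinom_nz[OF assms]]
    trinom_deg[of d] by auto

lemma inv_root:
  assumes "1 \<le> d" "w^d = 1 - w"
  shows "poly (trinom d) (inverse w) = 0" "w \<noteq> 0"
proof -
  show nz: "w \<noteq> 0"
  proof
    assume "w = 0" then show False using assms by (simp add: power_0_left)
  qed
  obtain m where m: "d = Suc m" using assms(1) by (cases d) auto
  have "w^d * poly (trinom d) (inverse w) = w^d * (inverse w)^d - w * (w^m * (inverse w)^m) - w^d"
    using assms(1) by (simp add: poly_trinom m algebra_simps)
  also have "\<dots> = 1 - w - w^d" using nz by (simp add: power_mult_distrib[symmetric])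
  also have "\<dots> = 0" using assms(2) by simp
  finally show "poly (trinom d) (inverse w) = 0" using nz by simp
qed

lemma outer_lower:
  assumes d: "6 \<le> d"
  shows "2 * (d div 6) \<le> outer_roots d"
proof -
  define S where "S = {1..d div 6}"
  have "\<forall>k\<in>S. \<exists>w. TT d k w = w \<and> norm w < 1 \<and> 0 < Im w \<and> w^d = 1 - w"
  proof
    fix k assume "k \<in> S"
    then have "1 \<le> k" "6 * k \<le> d" by (auto simp: S_def)
    then show "\<exists>w. TT d k w = w \<and> norm w < 1 \<and> 0 < Im w \<and> w^d = 1 - w"
      using outer_fix[OF d] by metis
  qed
  then obtain f where f: "\<And>k. k \<in> S \<Longrightarrow> TT d k (f k) = f k \<and> norm (f k) < 1 \<and> 0 < Im (f k) \<and> (f k)^d = 1 - f k"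
    by metis
  have injf: "inj_on f S"
  proof (rule inj_onI)
    fix k j assume "k \<in> S" "j \<in> S" "f k = f j"
    moreover have "k < d" "j < d" using \<open>k \<in> S\<close> \<open>j \<in> S\<close> d by (auto simp: S_def)
    moreover have "TT d k (f k) = f k" using f[OF \<open>k \<in> S\<close>] by blast
    moreover have "TT d j (f k) = f k" using f[OF \<open>j \<in> S\<close>] \<open>f k = f j\<close> by simp
    ultimately show "k = j" using TT_inj[of d k j "f k"] d by auto
  qed
  define W where "W = f ` S \<union> cnj ` f ` S"
  have disj: "f ` S \<inter> cnj ` f ` S = {}"
  proof (rule ccontr)
    assume "\<not> ?thesis"
    then obtain k j where "k \<in> S" "j \<in> S" "f k = cnj (f j)" by blast
    moreover have "0 < Im (f k)" using f[OF \<open>k \<in> S\<close>] by blast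
    moreover have "0 < Im (f j)" using f[OF \<open>j \<in> S\<close>] by blast
    ultimately show False by (metis complex_cnj_cancel_iff cnj.sel(2) neg_less_0_iff_less less_asym)
  qed
  have cW: "card W = 2 * card S"
  proof -
    have "card W = card (f ` S) + card (cnj ` f ` S)"
      unfolding W_def using disj by (intro card_Un_disjoint) (auto simp: S_def)
    moreover have "card (cnj ` f ` S) = card (f ` S)"
      by (intro card_image) (auto intro: inj_onI)
    moreover have "card (f ` S) = card S" using injf by (rule card_image)
    ultimately show ?thesis by simp
  qed
  have Wprop: "norm w < 1 \<and> w^d = 1 - w" if "w \<in> W" for w
  proof -
    from that consider (a) "w \<in> f ` S" | (b) "cnj w \<in> f ` S" by (auto simp: W_def)
    then show ?thesis
    proof cases
      case a then show ?thesis using f by auto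
    next
      case b
      then obtain k where "k \<in> S" "cnj w = f k" by auto
      then have "norm (cnj w) < 1 \<and> (cnj w)^d = 1 - cnj w" using f[OF \<open>k \<in> S\<close>] by simp
      then have "norm w < 1 \<and> cnj (w^d) = cnj (1 - w)" by simp
      then show ?thesis by (metis complex_cnj_cancel_iff)
    qed
  qed
  define Out where "Out = {z::complex. poly (trinom d) z = 0 \<and> 1 < norm z}"
  have sub: "inverse ` W \<subseteq> Out"
  proof
    fix z assume "z \<in> inverse ` W"
    then obtain w where w: "w \<in> W" "z = inverse w" by auto
    note wp = Wprop[OF w(1)]
    have "1 \<le> d" using d by simp
    note ir = inv_root[OF this conjunct2[OF wp]]
    have "1 < norm z" using wp ir(2) w(2) by (simp add: norm_inverse one_less_inverse)
    then show "z \<in> Out" using ir w by (simp add: Out_def)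
  qed
  have finO: "finite Out"
    using roots_finite_card(1)[of d] d by (auto simp: Out_def intro: finite_subset)
  have "card (inverse ` W) = card W"
    by (intro card_image) (auto intro: inj_onI)
  then have "card W \<le> card Out" using card_mono[OF finO sub] by simp
  then show ?thesis using cW by (simp add: S_def outer_roots_def Out_def)
qed

lemma outer_upper:
  assumes d: "24 \<le> d"
  shows "outer_roots d + card {d div 6 + 4 .. 5*d div 6 - 3} \<le> d"
proof -
  define S where "S = {d div 6 + 4 .. 5*d div 6 - 3}"
  have dm: "d = 6 * (d div 6) + d mod 6" "d mod 6 < 6" by simp_all
  have dm5: "5*d = 6 * (5*d div 6) + (5*d) mod 6" "(5*d) mod 6 < 6" by simp_all
  have "\<forall>k\<in>S. \<exists>w. TT d k w = w \<and> 1 \<le> norm w \<and> w^d = 1 - w"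
  proof
    fix k assume "k \<in> S"
    then have k: "d div 6 + 4 \<le> k" "k \<le> 5*d div 6 - 3" by (auto simp: S_def)
    have "real d/6 + 3 \<le> real k"
    proof -
      have "real d = 6 * real (d div 6) + real (d mod 6)" using dm by (metis of_nat_add of_nat_mult of_nat_numeral)
      moreover have "real (d mod 6) \<le> 6" using dm by simp
      moreover have "real (d div 6) + 4 \<le> real k" using k by simp
      ultimately show ?thesis by linarith
    qed
    moreover have "real k \<le> 5*real d/6 - 3"
    proof -
      have "real (5*d) = 6 * real (5*d div 6) + real ((5*d) mod 6)" using dm5 by (metis of_nat_add of_nat_mult of_nat_numeral)
      moreover have "3 \<le> 5*d div 6" using d by simp
      then have "real k + 3 \<le> real (5*d div 6)" using k by linarith
      moreover have "real (5*d) = 5 * real d" by simp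
      ultimately show ?thesis by linarith
    qed
    ultimately have "cos (2*pi*real k/real d) \<le> 1/2 - 12/real d" using cos_bound d by blast
    then show "\<exists>w. TT d k w = w \<and> 1 \<le> norm w \<and> w^d = 1 - w"
      using inner_fix[OF d] by metis
  qed
  then obtain f where f: "\<And>k. k \<in> S \<Longrightarrow> TT d k (f k) = f k \<and> 1 \<le> norm (f k) \<and> (f k)^d = 1 - f k"
    by metis
  have Slt: "k < d" if "k \<in> S" for k using that d by (auto simp: S_def)
  have injf: "inj_on f S"
  proof (rule inj_onI)
    fix k j assume "k \<in> S" "j \<in> S" "f k = f j"
    moreover have "TT d k (f k) = f k" using f[OF \<open>k \<in> S\<close>] by blast
    moreover have "TT d j (f k) = f k" using f[OF \<open>j \<in> S\<close>] \<open>f k = f j\<close> by simp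
    ultimately show "k = j" using TT_inj[of d k j "f k"] Slt d by auto
  qed
  define Out where "Out = {z::complex. poly (trinom d) z = 0 \<and> 1 < norm z}"
  define I where "I = {z::complex. poly (trinom d) z = 0 \<and> norm z \<le> 1}"
  have R: "Out \<union> I \<subseteq> {z. poly (trinom d) z = 0}" "Out \<inter> I = {}" by (auto simp: Out_def I_def)
  have fin: "finite {z. poly (trinom d) z = 0}" using roots_finite_card d by simp
  have finOI: "finite Out" "finite I" using R(1) fin by (auto intro: finite_subset)
  have "card Out + card I = card (Out \<union> I)" using finOI R(2) by (simp add: card_Un_disjoint)
  also have "\<dots> \<le> card {z. poly (trinom d) z = 0}" using R(1) fin by (rule card_mono[rotated])
  also have "\<dots> \<le> d" using roots_finite_card d by simp
  finally have OI: "card Out + card I \<le> d" .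
  have sub: "inverse ` f ` S \<subseteq> I"
  proof
    fix z assume "z \<in> inverse ` f ` S"
    then obtain k where k: "k \<in> S" "z = inverse (f k)" by auto
    note wp = f[OF k(1)]
    have "1 \<le> d" using d by simp
    note ir = inv_root[OF this conjunct2[OF conjunct2[OF wp]]]
    have "norm z \<le> 1" using wp k(2) by (simp add: norm_inverse inverse_le_1_iff)
    then show "z \<in> I" using ir k by (simp add: I_def)
  qed
  have "card (inverse ` f ` S) = card S"
    using injf by (simp add: card_image inj_on_def card_image)
  then have "card S \<le> card I" using card_mono[OF finOI(2) sub] by simp
  then show ?thesis using OI by (simp add: S_def outer_roots_def Out_def)
qed

theorem mainTheorem14:
  shows "(\<forall>d::nat. 6 \<le> d \<longrightarrow> 2 \<le> outer_roots d) \<and>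
         (\<lambda>d. real (outer_roots d) / real d) \<longlonglongrightarrow> 1 / 3"
proof
  show "\<forall>d::nat. 6 \<le> d \<longrightarrow> 2 \<le> outer_roots d"
  proof (intro allI impI)
    fix d :: nat assume "6 \<le> d"
    then have "1 \<le> d div 6" by simp
    then show "2 \<le> outer_roots d" using outer_lower[OF \<open>6 \<le> d\<close>] by linarith
  qed
  have low: "1/3 - 5/3 * inverse (real d) \<le> real (outer_roots d) / real d" if "24 \<le> d" for d
  proof -
    have dr: "real d \<ge> 24" using that by simp
    have "d = 6 * (d div 6) + d mod 6" "d mod 6 < 6" by simp_all
    then have "d \<le> 6 * (d div 6) + 5" by linarith
    then have "real d \<le> real (6 * (d div 6) + 5)" by (simp only: of_nat_le_iff)
    then have "real d \<le> 6 * real (d div 6) + 5" by simp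
    moreover have "2 * (d div 6) \<le> outer_roots d" using outer_lower[of d] that by simp
    then have "real (2 * (d div 6)) \<le> real (outer_roots d)" by (simp only: of_nat_le_iff)
    then have "2 * real (d div 6) \<le> real (outer_roots d)" by simp
    ultimately have "real d - 5 \<le> 3 * real (outer_roots d)" by linarith
    then have "(real d - 5) / (3 * real d) \<le> (3 * real (outer_roots d)) / (3 * real d)"
      using dr by (intro divide_right_mono) auto
    moreover have "(real d - 5) / (3 * real d) = 1/3 - 5/3 * inverse (real d)" using dr by (simp add: field_simps)
    moreover have "(3 * real (outer_roots d)) / (3 * real d) = real (outer_roots d) / real d" by simp
    ultimately show ?thesis by simp
  qed
  have upp: "real (outer_roots d) / real d \<le> 1/3 + 7 * inverse (real d)" if "24 \<le> d" for d
  proof -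
    have dr: "real d \<ge> 24" using that by simp
    have u: "outer_roots d + card {d div 6 + 4 .. 5*d div 6 - 3} \<le> d" using outer_upper[OF that] .
    have c: "card {d div 6 + 4 .. 5*d div 6 - 3} = Suc (5*d div 6 - 3) - (d div 6 + 4)" by simp
    have "d = 6 * (d div 6) + d mod 6" "5*d = 6 * (5*d div 6) + (5*d) mod 6" "(5*d) mod 6 < 6" by simp_all
    then have "6 * (d div 6) \<le> d" "5 * d \<le> 6 * (5*d div 6) + 5" by linarith+
    moreover have "3 \<le> 5*d div 6" "d div 6 + 4 \<le> Suc (5*d div 6 - 3)" using that by simp_all
    ultimately have "6 * card {d div 6 + 4 .. 5*d div 6 - 3} + 41 \<ge> 4 * d" using c by linarith
    then have "6 * outer_roots d \<le> 2 * d + 41" using u by linarith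
    then have "real (6 * outer_roots d) \<le> real (2 * d + 41)" by (simp only: of_nat_le_iff)
    then have "6 * real (outer_roots d) \<le> 2 * real d + 41" by simp
    then have "(6 * real (outer_roots d)) / (6 * real d) \<le> (2 * real d + 41) / (6 * real d)"
      using dr by (intro divide_right_mono) auto
    moreover have "(2 * real d + 41) / (6 * real d) = 1/3 + 41/6 * inverse (real d)" using dr by (simp add: field_simps)
    moreover have "(6 * real (outer_roots d)) / (6 * real d) = real (outer_roots d) / real d" by simp
    moreover have "41/6 * inverse (real d) \<le> 7 * inverse (real d)" using dr by simp
    ultimately show ?thesis by linarith
  qed
  have l1: "(\<lambda>d. 1/3 - 5/3 * inverse (real d)) \<longlonglongrightarrow> 1/3"
  proof -
    have "(\<lambda>d. 1/3 - 5/3 * inverse (real d)) \<longlonglongrightarrow> 1/3 - 5/3 * 0"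
      by (intro tendsto_intros lim_inverse_n)
    then show ?thesis by simp
  qed
  have l2: "(\<lambda>d. 1/3 + 7 * inverse (real d)) \<longlonglongrightarrow> 1/3"
  proof -
    have "(\<lambda>d. 1/3 + 7 * inverse (real d)) \<longlonglongrightarrow> 1/3 + 7 * 0"
      by (intro tendsto_intros lim_inverse_n)
    then show ?thesis by simp
  qed
  have e1: "\<forall>\<^sub>F n in sequentially. 1/3 - 5/3 * inverse (real n) \<le> real (outer_roots n) / real n"
    by (rule eventually_sequentiallyI[of 24]) (rule low)
  have e2: "\<forall>\<^sub>F n in sequentially. real (outer_roots n) / real n \<le> 1/3 + 7 * inverse (real n)"
    by (rule eventually_sequentiallyI[of 24]) (rule upp)
  show "(\<lambda>d. real (outer_roots d) / real d) \<longlonglongrightarrow> 1 / 3"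
    using tendsto_sandwich[OF e1 e2 l1 l2] by simp
qed

end
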